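(* Let $1\le p<\infty$. Let $\boldsymbol v=(v_n)_{n\in\mathbb{N}}$ and $\boldsymbol w=(w_n)_{n\in\mathbb{N}}$ be weight sequences such that $B_{\boldsymbol v}$ and $B_{\boldsymbol w}$ are frequently hypercyclic on $\ell_p$. If $FHC(B_{\boldsymbol v})\cap FHC(B_{\boldsymbol w})\neq\emptyset$, then for every $0<\varepsilon<1$ there exist increasing sequences $(m_k),(n_k),(m'_k),(n'_k)$ of positive integers tending to infinity with $\liminf_k n_k/m_k>0$, $\limsup_k n_k/m_k<\varepsilon$, $\liminf_k n'_k/m'_k>0$, $\limsup_k n'_k/m'_k<\varepsilon$, such that \[ \sum_{l\ge1}\frac{|w_1\cdots w_{m_l}|^p}{|v_1\cdots v_{m_l}|^p|w_1\cdots w_{m_l-n_l}|^p}<\infty \quad\text{and}\quad \sum_{l\ge1}\frac{|v_1\cdots v_{m'_l}|^p}{|w_1\cdots w_{m'_l}|^p|v_1\cdots v_{m'_l-n'_l}|^p}<\infty . \]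
   Context: $\ell_p$ is the space of complex sequences $(x_n)_{n\ge0}$ with finite $\|x\|_p$, unit vectors $(e_n)_{n\ge0}$. A weight is a bounded sequence of nonzero complex numbers; $B_{\boldsymbol w}e_0=0$, $B_{\boldsymbol w}e_n=w_ne_{n-1}$; empty products equal $1$. $FHC(T)$ is the set of vectors $x$ such that for every nonempty open $U$, $\{n:T^nx\in U\}$ has positive lower density; $T$ is frequently hypercyclic if $FHC(T)\ne\emptyset$. *)

theory Defs
  imports "HOL-Analysis.Analysis" "HOL-Library.Liminf_Limsup"
begin

text \<open>Sequences indexed by nat (e_n corresponds to index n).\<close>

definition lp_space :: "real \<Rightarrow> (nat \<Rightarrow> complex) set" where
  "lp_space p = {x. summable (\<lambda>n. norm (x n) powr p)}"

definition lp_norm :: "real \<Rightarrow> (nat \<Rightarrow> complex) \<Rightarrow> real" where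
  "lp_norm p x = (\<Sum>n. norm (x n) powr p) powr (1 / p)"

definition lp_open :: "real \<Rightarrow> (nat \<Rightarrow> complex) set \<Rightarrow> bool" where
  "lp_open p U \<longleftrightarrow> U \<subseteq> lp_space p \<and>
     (\<forall>x\<in>U. \<exists>e>0. \<forall>y\<in>lp_space p. lp_norm p (y - x) < e \<longrightarrow> y \<in> U)"

text \<open>A weight: bounded sequence of nonzero complex numbers (w_n, n >= 1 are used).\<close>
definition is_weight :: "(nat \<Rightarrow> complex) \<Rightarrow> bool" where
  "is_weight w \<longleftrightarrow> (\<forall>n\<ge>1. w n \<noteq> 0) \<and> bounded (range w)"

text \<open>Weighted backward shift: B_w e_0 = 0, B_w e_n = w_n e_(n-1).\<close>
definition bshift :: "(nat \<Rightarrow> complex) \<Rightarrow> (nat \<Rightarrow> complex) \<Rightarrow> (nat \<Rightarrow> complex)" where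
  "bshift w x = (\<lambda>n. w (Suc n) * x (Suc n))"

definition lower_density :: "nat set \<Rightarrow> ereal" where
  "lower_density A = liminf (\<lambda>N. ereal (real (card (A \<inter> {..<N})) / real N))"

definition FHC :: "real \<Rightarrow> ((nat \<Rightarrow> complex) \<Rightarrow> (nat \<Rightarrow> complex)) \<Rightarrow> (nat \<Rightarrow> complex) set" where
  "FHC p T = {x \<in> lp_space p. \<forall>U. lp_open p U \<and> U \<noteq> {} \<longrightarrow>
       lower_density {n. (T ^^ n) x \<in> U} > 0}"

end

theory Submission
  imports Defs
begin

lemma lp_coord_le:
  assumes "z \<in> lp_space p" "p > 0"
  shows "norm (z i) \<le> lp_norm p z"
proof -
  have s: "summable (\<lambda>n. norm (z n) powr p)" using assms(1) by (simp add: lp_space_def)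
  have "norm (z i) powr p \<le> (\<Sum>n. norm (z n) powr p)"
    using sum_le_suminf[OF s, of "{i}"] by simp
  hence "(norm (z i) powr p) powr (1/p) \<le> (\<Sum>n. norm (z n) powr p) powr (1/p)"
    by (rule powr_mono2[rotated 2]) (use assms(2) in auto)
  moreover have "(norm (z i) powr p) powr (1/p) = norm (z i)"
    using assms(2) by (simp add: powr_powr)
  ultimately show ?thesis by (simp add: lp_norm_def)
qed

lemma lp_diff:
  assumes "x \<in> lp_space p" "y \<in> lp_space p" "p > 0"
  shows "y - x \<in> lp_space p"
proof -
  have sx: "summable (\<lambda>n. norm (x n) powr p)" and sy: "summable (\<lambda>n. norm (y n) powr p)"
    using assms by (auto simp: lp_space_def)
  have b: "norm ((y - x) n) powr p \<le> 2 powr p * (norm (y n) powr p + norm (x n) powr p)" for n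
  proof -
    have "norm ((y - x) n) \<le> 2 * max (norm (y n)) (norm (x n))"
      using norm_triangle_ineq4[of "y n" "x n"] by simp
    hence "norm ((y - x) n) powr p \<le> (2 * max (norm (y n)) (norm (x n))) powr p"
      using assms(3) by (intro powr_mono2) auto
    also have "\<dots> = 2 powr p * max (norm (y n)) (norm (x n)) powr p"
      by (simp add: powr_mult)
    also have "max (norm (y n)) (norm (x n)) powr p \<le> norm (y n) powr p + norm (x n) powr p"
      by (simp add: max_def)
    finally show ?thesis by simp
  qed
  have "summable (\<lambda>n. 2 powr p * (norm (y n) powr p + norm (x n) powr p))"
    using sx sy by (intro summable_mult summable_add)
  hence "summable (\<lambda>n. norm ((y - x) n) powr p)"
    by (rule summable_comparison_test'[where N=0]) (use b in auto)
  thus ?thesis by (simp add: lp_space_def)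
qed

lemma bshift_pow:
  "(bshift w ^^ k) x i = (\<Prod>j<k. w (Suc (i + j))) * x (i + k)"
proof (induction k arbitrary: x)
  case 0 then show ?case by simp
next
  case (Suc k)
  have "(bshift w ^^ Suc k) x i = (bshift w ^^ k) (bshift w x) i"
    by (simp only: funpow_Suc_right comp_def)
  also have "\<dots> = (\<Prod>j<k. w (Suc (i + j))) * (bshift w x) (i + k)" by (rule Suc.IH)
  also have "\<dots> = (\<Prod>j<Suc k. w (Suc (i + j))) * x (i + Suc k)"
    by (simp add: bshift_def)
  finally show ?case .
qed

lemma prod_split:
  "(\<Prod>i=1..a + n. w i) = (\<Prod>i=1..a. w i) * (\<Prod>j<n. w (Suc (a + j)))"
proof (induction n)
  case 0 then show ?case by simp
next
  case (Suc n)
  have "(\<Prod>i=1..a + Suc n. w i) = (\<Prod>i=1..a + n. w i) * w (Suc (a + n))"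
    by (simp add: prod.nat_ivl_Suc')
  then show ?case using Suc by (simp add: mult.assoc)
qed

definition U1 :: "real \<Rightarrow> (nat \<Rightarrow> complex) set" where
  "U1 p = {y \<in> lp_space p. norm (y 0 - 1) < 1/2}"

definition U2 :: "real \<Rightarrow> real \<Rightarrow> (nat \<Rightarrow> complex) set" where
  "U2 p \<eta> = {y \<in> lp_space p. \<exists>r<\<eta>. \<forall>i. norm (y i) \<le> r}"

lemma lp_zero: "(\<lambda>_. 0) \<in> lp_space p"
  by (simp add: lp_space_def)

lemma lp_e0: "(\<lambda>n. if n = 0 then 1 else 0) \<in> lp_space p"
  unfolding lp_space_def mem_Collect_eq by (rule summable_finite[of "{0}"]) auto

lemma U1_open: "p > 0 \<Longrightarrow> lp_open p (U1 p) \<and> U1 p \<noteq> {}"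
proof -
  assume p: "p > 0"
  have "(\<lambda>n. if n = 0 then 1 else 0) \<in> U1 p" using lp_e0 by (simp add: U1_def)
  moreover have "lp_open p (U1 p)"
    unfolding lp_open_def
  proof (intro conjI ballI)
    show "U1 p \<subseteq> lp_space p" by (auto simp: U1_def)
  next
    fix x assume x: "x \<in> U1 p"
    show "\<exists>e>0. \<forall>y\<in>lp_space p. lp_norm p (y - x) < e \<longrightarrow> y \<in> U1 p"
    proof (intro exI[of _ "1/2 - norm (x 0 - 1)"] conjI ballI impI)
      show "0 < 1/2 - norm (x 0 - 1)" using x by (simp add: U1_def)
    next
      fix y assume y: "y \<in> lp_space p" and d: "lp_norm p (y - x) < 1/2 - norm (x 0 - 1)"
      have xl: "x \<in> lp_space p" using x by (simp add: U1_def)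
      have "norm ((y - x) 0) \<le> lp_norm p (y - x)" by (rule lp_coord_le[OF lp_diff[OF xl y p] p])
      moreover have "norm (y 0 - 1) \<le> norm ((y - x) 0) + norm (x 0 - 1)"
        using norm_triangle_ineq[of "y 0 - x 0" "x 0 - 1"] by simp
      ultimately show "y \<in> U1 p" using y d by (simp add: U1_def)
    qed
  qed
  ultimately show ?thesis by blast
qed

lemma U2_open: "p > 0 \<Longrightarrow> \<eta> > 0 \<Longrightarrow> lp_open p (U2 p \<eta>) \<and> U2 p \<eta> \<noteq> {}"
proof -
  assume p: "p > 0" and eta: "\<eta> > 0"
  have "(\<lambda>_. 0) \<in> U2 p \<eta>" using lp_zero eta by (auto simp: U2_def)
  moreover have "lp_open p (U2 p \<eta>)"
    unfolding lp_open_def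
  proof (intro conjI ballI)
    show "U2 p \<eta> \<subseteq> lp_space p" by (auto simp: U2_def)
  next
    fix x assume x: "x \<in> U2 p \<eta>"
    then obtain r where r: "r < \<eta>" "\<forall>i. norm (x i) \<le> r" and xl: "x \<in> lp_space p"
      by (auto simp: U2_def)
    show "\<exists>e>0. \<forall>y\<in>lp_space p. lp_norm p (y - x) < e \<longrightarrow> y \<in> U2 p \<eta>"
    proof (intro exI[of _ "\<eta> - r"] conjI ballI impI)
      show "0 < \<eta> - r" using r by simp
    next
      fix y assume y: "y \<in> lp_space p" and d: "lp_norm p (y - x) < \<eta> - r"
      have "norm (y i) \<le> r + lp_norm p (y - x)" for i
      proof -
        have "norm ((y - x) i) \<le> lp_norm p (y - x)" by (rule lp_coord_le[OF lp_diff[OF xl y p] p])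
        moreover have "norm (y i) \<le> norm ((y - x) i) + norm (x i)"
          using norm_triangle_ineq[of "y i - x i" "x i"] by simp
        ultimately show ?thesis using r(2)[rule_format, of i] by linarith
      qed
      moreover have "r + lp_norm p (y - x) < \<eta>" using d by simp
      ultimately show "y \<in> U2 p \<eta>" using y by (auto simp: U2_def)
    qed
  qed
  ultimately show ?thesis by blast
qed

lemma density_pos:
  assumes "lower_density A > 0"
  shows "\<exists>c>0. \<forall>\<^sub>F N in sequentially. c * real N < real (card (A \<inter> {..<N}))"
proof -
  obtain c where c: "0 < ereal c" "ereal c < lower_density A"
    using ereal_dense2[OF assms] by blast
  have "\<forall>\<^sub>F N in sequentially. ereal c < ereal (real (card (A \<inter> {..<N})) / real N)"
    using less_LiminfD[OF c(2)[unfolded lower_density_def]] .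
  moreover have "\<forall>\<^sub>F N in sequentially. N > (0::nat)" by (rule eventually_gt_at_top)
  ultimately have "\<forall>\<^sub>F N in sequentially. c * real N < real (card (A \<inter> {..<N}))"
    by eventually_elim (simp add: field_simps)
  thus ?thesis using c(1) by auto
qed

lemma density_unbounded:
  assumes "lower_density A > 0"
  shows "\<exists>n\<in>A. n > B"
proof -
  obtain c where c: "c > 0" "\<forall>\<^sub>F N in sequentially. c * real N < real (card (A \<inter> {..<N}))"
    using density_pos[OF assms] by blast
  have "infinite A"
  proof
    assume fin: "finite A"
    obtain N1 where N1: "\<And>N. N \<ge> N1 \<Longrightarrow> c * real N < real (card (A \<inter> {..<N}))"
      using c(2) by (auto simp: eventually_sequentially)
    obtain N where N: "real (card A) / c < real N" "N \<ge> N1"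
      by (metis reals_Archimedean2 max.cobounded1 max.cobounded2 of_nat_le_iff order_less_le_trans)
    have "card (A \<inter> {..<N}) \<le> card A" using fin by (intro card_mono) auto
    moreover have "real (card A) < c * real N" using N(1) c(1) by (simp add: field_simps)
    ultimately show False using N1[OF N(2)] by linarith
  qed
  thus ?thesis by (meson infinite_nat_iff_unbounded)
qed

lemma density_window:
  assumes "lower_density A > 0" "K \<ge> (1::nat)"
  shows "\<exists>L N0. K < L \<and> (\<forall>n\<ge>N0. \<exists>m\<in>A. K * n \<le> m \<and> m < L * n)"
proof -
  obtain c where c: "c > 0" "\<forall>\<^sub>F N in sequentially. c * real N < real (card (A \<inter> {..<N}))"
    using density_pos[OF assms(1)] by blast
  obtain N1 where N1: "\<And>N. N \<ge> N1 \<Longrightarrow> c * real N < real (card (A \<inter> {..<N}))"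
    using c(2) by (auto simp: eventually_sequentially)
  define L where "L = nat \<lceil>real K / c\<rceil> + K + 1"
  have KL: "K < L" by (simp add: L_def)
  have Lc: "real K \<le> c * real L"
  proof -
    have "real K / c \<le> real (nat \<lceil>real K / c\<rceil>)" by linarith
    also have "\<dots> \<le> real L" by (simp add: L_def)
    finally show ?thesis using c(1) by (simp add: field_simps)
  qed
  have "\<exists>m\<in>A. K * n \<le> m \<and> m < L * n" if n: "n \<ge> N1" for n
  proof (rule ccontr)
    assume "\<not> ?thesis"
    hence sub: "A \<inter> {..<L * n} \<subseteq> {..<K * n}" by auto
    have "card (A \<inter> {..<L * n}) \<le> K * n" using card_mono[OF _ sub] by simp
    moreover have "L * n \<ge> N1" using n KL by (metis dual_order.trans le_add2 less_imp_Suc_add mult_Suc mult_le_mono1 mult_1 Suc_leI le0 add_leE)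
    hence "c * real (L * n) < real (card (A \<inter> {..<L * n}))" by (rule N1)
    moreover have "real (K * n) \<le> c * real (L * n)" using Lc c(1)
      by (simp add: mult.assoc[symmetric] mult_right_mono)
    ultimately show False by linarith
  qed
  thus ?thesis using KL by blast
qed

lemma term_bound:
  fixes v w x :: "nat \<Rightarrow> complex"
  assumes p: "1 \<le> p" and wn: "\<forall>n\<ge>1. w n \<noteq> 0" and eta: "\<eta> > 0" "2 * \<eta> \<le> 1"
    and hw: "(bshift w ^^ n) x \<in> U2 p \<eta>" and hv: "(bshift v ^^ m) x \<in> U1 p" and nm: "n \<le> m"
  shows "norm (\<Prod>i=1..m. w i) powr p / (norm (\<Prod>i=1..m. v i) powr p * norm (\<Prod>i=1..m - n. w i) powr p) \<le> 2 * \<eta>"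
proof -
  define P where "P = (\<Prod>j<n. w (Suc (m - n + j)))"
  define V where "V = (\<Prod>i=1..m. v i)"
  define W1 where "W1 = (\<Prod>i=1..m - n. w i)"
  have mm: "m - n + n = m" using nm by simp
  have Wm: "(\<Prod>i=1..m. w i) = W1 * P"
    using prod_split[where w=w and a="m - n" and n=n] unfolding mm W1_def P_def .
  have Vm: "(bshift v ^^ m) x 0 = V * x m"
    using bshift_pow[where w=v and k=m and x=x and i=0] prod_split[where w=v and a=0 and n=m] by (simp add: V_def)
  have Pm: "(bshift w ^^ n) x (m - n) = P * x m"
    using bshift_pow[where w=w and k=n and x=x and i="m - n"] unfolding mm P_def by simp
  obtain r where r: "r < \<eta>" "norm ((bshift w ^^ n) x (m - n)) \<le> r"
    using hw by (auto simp: U2_def)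
  have h1: "norm P * norm (x m) < \<eta>" using r Pm by (simp add: norm_mult)
  have "norm (V * x m - 1) < 1/2" using hv Vm by (simp add: U1_def)
  hence h2: "norm V * norm (x m) > 1/2"
    using norm_triangle_ineq2[of 1 "V * x m"] by (simp add: norm_mult norm_minus_commute)
  have W1nz: "W1 \<noteq> 0" using wn by (auto simp: W1_def)
  have xpos: "norm (x m) > 0"
  proof (rule ccontr)
    assume "\<not> norm (x m) > 0" hence "norm (x m) = 0" using norm_ge_zero[of "x m"] by linarith
    thus False using h2 by simp
  qed
  have Vpos: "norm V > 0"
  proof (rule ccontr)
    assume "\<not> norm V > 0" hence "norm V = 0" using norm_ge_zero[of V] by linarith
    thus False using h2 by simp
  qed
  have ratio: "norm P / norm V \<le> 2 * \<eta>"
  proof -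
    have "2 * \<eta> * (1/2) < 2 * \<eta> * (norm V * norm (x m))"
      using mult_strict_left_mono[OF h2, of "2 * \<eta>"] eta by simp
    hence "norm P * norm (x m) < 2 * \<eta> * (norm V * norm (x m))" using h1 by simp
    hence "norm P < 2 * \<eta> * norm V" using xpos by (simp add: mult.assoc[symmetric])
    thus ?thesis using Vpos by (simp add: divide_le_eq)
  qed
  have "norm (\<Prod>i=1..m. w i) powr p / (norm V powr p * norm W1 powr p) = (norm P / norm V) powr p"
    using W1nz unfolding Wm by (simp add: norm_mult powr_mult powr_divide)
  also have "\<dots> \<le> (norm P / norm V) powr 1"
    using ratio eta p by (intro powr_mono') auto
  also have "\<dots> \<le> 2 * \<eta>" using ratio by simp
  finally show ?thesis by (simp add: V_def W1_def)
qed

lemma one_side: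
  fixes p :: real and v w x :: "nat \<Rightarrow> complex" and K :: nat
  assumes p: "1 \<le> p" and wn: "\<forall>n\<ge>1. w n \<noteq> 0"
    and xv: "x \<in> FHC p (bshift v)" and xw: "x \<in> FHC p (bshift w)" and K: "K \<ge> 1"
  shows "\<exists>L m n. K < L \<and> strict_mono m \<and> strict_mono n \<and>
     (\<forall>k. 0 < n k \<and> K * n k \<le> m k \<and> m k < L * n k) \<and>
     summable (\<lambda>l. norm (\<Prod>i=1..m l. w i) powr p /
        (norm (\<Prod>i=1..m l. v i) powr p * norm (\<Prod>i=1..m l - n l. w i) powr p))"
proof -
  have p0: "p > 0" using p by simp
  define A where "A = {m. (bshift v ^^ m) x \<in> U1 p}"
  have dA: "lower_density A > 0" using xv U1_open[OF p0] by (auto simp: FHC_def A_def)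
  define \<eta> :: "nat \<Rightarrow> real" where "\<eta> l = (1/2) ^ (l + 2)" for l
  have eta: "\<eta> l > 0" "2 * \<eta> l \<le> 1" "2 * \<eta> l = (1/2) ^ (l+1)" for l
  proof -
    have "(1/2::real) ^ l \<le> 1" by (rule power_le_one) auto
    thus "\<eta> l > 0" "2 * \<eta> l \<le> 1" "2 * \<eta> l = (1/2) ^ (l+1)" by (auto simp: \<eta>_def)
  qed
  define D where "D l = {n. (bshift w ^^ n) x \<in> U2 p (\<eta> l)}" for l
  have dD: "lower_density (D l) > 0" for l
    using xw U2_open[OF p0 eta(1)[of l]] by (auto simp: FHC_def D_def)
  obtain L N0 where L: "K < L" "\<And>n. n \<ge> N0 \<Longrightarrow> \<exists>m\<in>A. K * n \<le> m \<and> m < L * n"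
    using density_window[OF dA K] by blast
  define Q where "Q l B nm \<longleftrightarrow> fst nm > B \<and> fst nm \<in> D l \<and> snd nm \<in> A \<and>
      K * fst nm \<le> snd nm \<and> snd nm < L * fst nm" for l B and nm :: "nat \<times> nat"
  have ex: "\<exists>nm. Q l B nm" for l B
  proof -
    obtain n where n: "n \<in> D l" "n > max B N0" using density_unbounded[OF dD] by blast
    obtain m where "m \<in> A" "K * n \<le> m" "m < L * n" using L(2)[of n] n by auto
    thus ?thesis using n by (auto simp: Q_def intro!: exI[of _ "(n, m)"])
  qed
  obtain sel where sel: "\<And>l B. Q l B (sel l B)" using ex by metis
  define s where "s = rec_nat (sel 0 0) (\<lambda>l prev. sel (Suc l) (snd prev))"
  have s0: "s 0 = sel 0 0" and sS: "s (Suc l) = sel (Suc l) (snd (s l))" for l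
    by (simp_all add: s_def)
  define n where "n l = fst (s l)" for l
  define m where "m l = snd (s l)" for l
  have P: "n l \<in> D l \<and> m l \<in> A \<and> K * n l \<le> m l \<and> m l < L * n l \<and> 0 < n l" for l
  proof (cases l)
    case 0 then show ?thesis using sel[of 0 0] by (auto simp: Q_def n_def m_def s0)
  next
    case (Suc l') then show ?thesis using sel[of l "snd (s l')"] by (auto simp: Q_def n_def m_def sS)
  qed
  have nS: "n (Suc l) > m l" for l using sel[of "Suc l" "snd (s l)"] by (simp add: Q_def n_def m_def sS)
  have nm: "n l \<le> m l" for l
  proof -
    have "n l \<le> K * n l" using K by simp
    thus ?thesis using P[of l] by linarith
  qed
  have smm: "strict_mono m"
  proof (rule strict_monoI_Suc)
    fix l show "m l < m (Suc l)" using nS[of l] nm[of "Suc l"] by linarith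
  qed
  have smn: "strict_mono n"
  proof (rule strict_monoI_Suc)
    fix l show "n l < n (Suc l)" using nS[of l] nm[of l] by linarith
  qed
  have tb: "norm (norm (\<Prod>i=1..m l. w i) powr p /
        (norm (\<Prod>i=1..m l. v i) powr p * norm (\<Prod>i=1..m l - n l. w i) powr p)) \<le> (1/2) ^ (l+1)" for l
  proof -
    have "norm (\<Prod>i=1..m l. w i) powr p /
        (norm (\<Prod>i=1..m l. v i) powr p * norm (\<Prod>i=1..m l - n l. w i) powr p) \<le> 2 * \<eta> l"
      using term_bound[OF p wn eta(1) eta(2), where n="n l" and x=x and v=v and m="m l"] P[of l] nm[of l]
      by (auto simp: D_def A_def)
    thus ?thesis using eta(3)[of l] by simp
  qed
  have "summable (\<lambda>l. (1/2::real) ^ (l+1))" by simp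
  hence "summable (\<lambda>l. norm (\<Prod>i=1..m l. w i) powr p /
        (norm (\<Prod>i=1..m l. v i) powr p * norm (\<Prod>i=1..m l - n l. w i) powr p))"
    by (rule summable_comparison_test'[where N=0]) (use tb in auto)
  thus ?thesis using L(1) smm smn P by blast
qed

lemma ratio_bounds:
  fixes n m :: "nat \<Rightarrow> nat" and K L :: nat
  assumes h: "\<forall>k. 0 < n k \<and> K * n k \<le> m k \<and> m k < L * n k" and K: "K \<ge> 1"
  shows "ereal (1 / real L) \<le> liminf (\<lambda>k. ereal (real (n k) / real (m k)))"
    and "limsup (\<lambda>k. ereal (real (n k) / real (m k))) \<le> ereal (1 / real K)"
proof -
  have b: "1 / real L \<le> real (n k) / real (m k) \<and> real (n k) / real (m k) \<le> 1 / real K" for k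
  proof -
    have hk: "0 < n k" "K * n k \<le> m k" "m k < L * n k" using h by auto
    have mpos: "real (m k) > 0" using hk K by (metis of_nat_0_less_iff less_le_trans mult_le_mono1 mult_1 nat_mult_1)
    have Lpos: "real L > 0" using hk by (metis gr0I mult_0 not_less0 of_nat_0_less_iff)
    have Kpos: "real K > 0" using K by simp
    have r1: "real (m k) \<le> real L * real (n k)" using hk(3) by (metis less_imp_le of_nat_le_iff of_nat_mult)
    have r2: "real K * real (n k) \<le> real (m k)" using hk(2) by (metis of_nat_le_iff of_nat_mult)
    show ?thesis using mpos Lpos Kpos r1 r2 by (simp add: field_simps)
  qed
  show "ereal (1 / real L) \<le> liminf (\<lambda>k. ereal (real (n k) / real (m k)))"
    by (rule Liminf_bounded) (use b in auto)
  show "limsup (\<lambda>k. ereal (real (n k) / real (m k))) \<le> ereal (1 / real K)"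
    by (rule Limsup_bounded) (use b in auto)
qed

theorem theorem4p9:
  fixes p \<epsilon> :: real and v w :: "nat \<Rightarrow> complex"
  assumes "1 \<le> p"
    and "is_weight v" and "is_weight w"
    and "FHC p (bshift v) \<noteq> {}" and "FHC p (bshift w) \<noteq> {}"
    and "FHC p (bshift v) \<inter> FHC p (bshift w) \<noteq> {}"
    and "0 < \<epsilon>" and "\<epsilon> < 1"
  shows "\<exists>m n m' n' :: nat \<Rightarrow> nat.
     strict_mono m \<and> strict_mono n \<and> strict_mono m' \<and> strict_mono n' \<and>
     (\<forall>k. 0 < m k \<and> 0 < n k \<and> 0 < m' k \<and> 0 < n' k) \<and>
     filterlim m at_top sequentially \<and> filterlim n at_top sequentially \<and>
     filterlim m' at_top sequentially \<and> filterlim n' at_top sequentially \<and>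
     liminf (\<lambda>k. ereal (real (n k) / real (m k))) > 0 \<and>
     limsup (\<lambda>k. ereal (real (n k) / real (m k))) < ereal \<epsilon> \<and>
     liminf (\<lambda>k. ereal (real (n' k) / real (m' k))) > 0 \<and>
     limsup (\<lambda>k. ereal (real (n' k) / real (m' k))) < ereal \<epsilon> \<and>
     summable (\<lambda>l. norm (\<Prod>i=1..m l. w i) powr p /
        (norm (\<Prod>i=1..m l. v i) powr p * norm (\<Prod>i=1..m l - n l. w i) powr p)) \<and>
     summable (\<lambda>l. norm (\<Prod>i=1..m' l. v i) powr p /
        (norm (\<Prod>i=1..m' l. w i) powr p * norm (\<Prod>i=1..m' l - n' l. v i) powr p))"
proof -
  obtain x where xv: "x \<in> FHC p (bshift v)" and xw: "x \<in> FHC p (bshift w)" using assms(6) by blast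
  have vn: "\<forall>n\<ge>1. v n \<noteq> 0" and wn: "\<forall>n\<ge>1. w n \<noteq> 0"
    using assms(2,3) by (auto simp: is_weight_def)
  define K where "K = nat \<lceil>2 / \<epsilon>\<rceil>"
  have K2: "2 / \<epsilon> \<le> real K" unfolding K_def by linarith
  have K1: "K \<ge> 1"
  proof -
    have "2 / \<epsilon> > 0" using assms(7) by simp
    thus ?thesis using K2 by linarith
  qed
  have Keps: "1 / real K < \<epsilon>"
  proof -
    have Kp: "real K > 0" using K1 by simp
    have "2 \<le> \<epsilon> * real K" using K2 assms(7) by (simp add: field_simps)
    thus ?thesis using Kp assms(7) by (simp add: field_simps)
  qed
  obtain L m n where 1: "K < L" "strict_mono m" "strict_mono n"
     "\<forall>k. 0 < n k \<and> K * n k \<le> m k \<and> m k < L * n k"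
     "summable (\<lambda>l. norm (\<Prod>i=1..m l. w i) powr p /
        (norm (\<Prod>i=1..m l. v i) powr p * norm (\<Prod>i=1..m l - n l. w i) powr p))"
    using one_side[OF assms(1) wn xv xw K1] by blast
  obtain L' m' n' where 2: "K < L'" "strict_mono m'" "strict_mono n'"
     "\<forall>k. 0 < n' k \<and> K * n' k \<le> m' k \<and> m' k < L' * n' k"
     "summable (\<lambda>l. norm (\<Prod>i=1..m' l. v i) powr p /
        (norm (\<Prod>i=1..m' l. w i) powr p * norm (\<Prod>i=1..m' l - n' l. v i) powr p))"
    using one_side[OF assms(1) vn xw xv K1] by blast
  have pos: "\<forall>k. 0 < m k \<and> 0 < n k \<and> 0 < m' k \<and> 0 < n' k"
  proof
    fix k
    have "n k \<le> K * n k" "n' k \<le> K * n' k" using K1 by auto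
    thus "0 < m k \<and> 0 < n k \<and> 0 < m' k \<and> 0 < n' k" using 1(4) 2(4) by (metis less_le_trans)
  qed
  have Lp: "real L > 0" "real L' > 0" using 1(1) 2(1) by auto
  have li1: "liminf (\<lambda>k. ereal (real (n k) / real (m k))) > 0"
    using ratio_bounds(1)[OF 1(4) K1] Lp(1) by (meson ereal_less(2) order_less_le_trans zero_less_divide_1_iff)
  have li2: "liminf (\<lambda>k. ereal (real (n' k) / real (m' k))) > 0"
    using ratio_bounds(1)[OF 2(4) K1] Lp(2) by (meson ereal_less(2) order_less_le_trans zero_less_divide_1_iff)
  have ls1: "limsup (\<lambda>k. ereal (real (n k) / real (m k))) < ereal \<epsilon>"
    using ratio_bounds(2)[OF 1(4) K1] Keps by (meson ereal_less_eq(3) order_le_less_trans less_ereal.simps(1))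
  have ls2: "limsup (\<lambda>k. ereal (real (n' k) / real (m' k))) < ereal \<epsilon>"
    using ratio_bounds(2)[OF 2(4) K1] Keps by (meson ereal_less_eq(3) order_le_less_trans less_ereal.simps(1))
  show ?thesis
    using 1 2 pos li1 li2 ls1 ls2 filterlim_subseq[OF 1(2)] filterlim_subseq[OF 1(3)]
      filterlim_subseq[OF 2(2)] filterlim_subseq[OF 2(3)]
    by blast
qed

end
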